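(* Let $A,F_1,\dots,F_k,B$ be a sequence of faces of $\mathcal{C}$, all of the same dimension, such that each face opposes the next one. Then the categories $e_ARe_A\text{-mod}$ and $e_BRe_B\text{-mod}$ of finite-dimensional modules are equivalent.
   Context: Let $\mathcal{H}$ be a finite arrangement of linear hyperplanes in $\mathbb{R}^n$, each $H$ cut out by a fixed real linear form $f_H$, with sign vectors $\sigma(x)\in\{+,-,0\}^{\mathcal{H}}$. Faces are classes of points with equal sign vector; $\mathcal{C}$ is the set of faces, ordered by $C'\le C$ iff $C'\subseteq\overline{C}$. Two faces $A,B$ of equal dimension $d\ge1$ oppose each other if they have the same linear span and there is a face $C$ of dimension $d-1$, $C\le A$, $C\le B$, with $\sigma(A)_H=-\sigma(B)_H$ for every $H$ with $\sigma(C)_H=0$. $A,B,C$ are collinear if a line segment meets $A,B,C$ in that order. $R$ is the $\mathbb{C}$-algebra generated by $e_C$ ($C\in\mathcal{C}$) with relations $e_C^2=e_C$; $e_Ae_C=e_Ae_Be_C$ for collinear $A,B,C$; $e_Ae_B=e_B=e_Be_A$ for $A\le B$; localised by inverting all $e_Ae_Be_A+(1-e_A)$ with $A,B$ opposing. *)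

theory Defs
  imports "HOL-Analysis.Analysis" "Jordan_Normal_Form.Matrix"
begin

text \<open>The arrangement is indexed by a finite set H; hyperplane h is cut out by the
  linear form x \<mapsto> f h \<bullet> x.  Sign vectors take values in {-1,0,1} (via sgn);
  outside H they are 0.  A face is identified with its sign vector.\<close>

definition sigma :: "'h set \<Rightarrow> ('h \<Rightarrow> real^'n) \<Rightarrow> real^'n \<Rightarrow> ('h \<Rightarrow> real)" where
  "sigma H f x = (\<lambda>h. if h \<in> H then sgn (f h \<bullet> x) else 0)"

definition faces :: "'h set \<Rightarrow> ('h \<Rightarrow> real^'n) \<Rightarrow> ('h \<Rightarrow> real) set" where
  "faces H f = range (sigma H f)"

definition faceset :: "'h set \<Rightarrow> ('h \<Rightarrow> real^'n) \<Rightarrow> ('h \<Rightarrow> real) \<Rightarrow> (real^'n) set" where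
  "faceset H f s = {x. sigma H f x = s}"

definition face_dim :: "'h set \<Rightarrow> ('h \<Rightarrow> real^'n) \<Rightarrow> ('h \<Rightarrow> real) \<Rightarrow> nat" where
  "face_dim H f s = dim (faceset H f s)"

definition face_le :: "'h set \<Rightarrow> ('h \<Rightarrow> real^'n) \<Rightarrow> ('h \<Rightarrow> real) \<Rightarrow> ('h \<Rightarrow> real) \<Rightarrow> bool" where
  "face_le H f C' C \<longleftrightarrow> faceset H f C' \<subseteq> closure (faceset H f C)"

definition opposes :: "'h set \<Rightarrow> ('h \<Rightarrow> real^'n) \<Rightarrow> ('h \<Rightarrow> real) \<Rightarrow> ('h \<Rightarrow> real) \<Rightarrow> bool" where
  "opposes H f A B \<longleftrightarrow>
     A \<in> faces H f \<and> B \<in> faces H f \<and>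
     face_dim H f A = face_dim H f B \<and> face_dim H f A \<ge> 1 \<and>
     span (faceset H f A) = span (faceset H f B) \<and>
     (\<exists>C \<in> faces H f. face_dim H f C = face_dim H f A - 1 \<and>
        face_le H f C A \<and> face_le H f C B \<and>
        (\<forall>h\<in>H. C h = 0 \<longrightarrow> A h = - B h))"

definition collinear_faces :: "'h set \<Rightarrow> ('h \<Rightarrow> real^'n) \<Rightarrow> ('h \<Rightarrow> real) \<Rightarrow> ('h \<Rightarrow> real) \<Rightarrow> ('h \<Rightarrow> real) \<Rightarrow> bool" where
  "collinear_faces H f A B C \<longleftrightarrow>
     (\<exists>a\<in>faceset H f A. \<exists>b\<in>faceset H f B. \<exists>c\<in>faceset H f C. b \<in> closed_segment a c)"

text \<open>R is the quotient of the free complex algebra on generators e_C (C a face) and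
  t_{A,B} (A,B opposing; t_{A,B} is the adjoined inverse of e_A e_B e_A + (1 - e_A),
  i.e. Cohn's universal localisation) by the two-sided ideal generated by the relations
  below.  Elements of the free algebra are written as formal linear combinations of
  words, i.e. lists of (coefficient, word) pairs; the empty word is the unit 1.\<close>

datatype 'h gen = GenE "'h \<Rightarrow> real" | GenT "'h \<Rightarrow> real" "'h \<Rightarrow> real"

definition R_gens :: "'h set \<Rightarrow> ('h \<Rightarrow> real^'n) \<Rightarrow> 'h gen set" where
  "R_gens H f = GenE ` faces H f \<union> {GenT A B | A B. opposes H f A B}"

definition R_rels :: "'h set \<Rightarrow> ('h \<Rightarrow> real^'n) \<Rightarrow> (complex \<times> 'h gen list) list set" where
  "R_rels H f =
     {[(1, [GenE C, GenE C]), (-1, [GenE C])] | C. C \<in> faces H f}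
   \<union> {[(1, [GenE A, GenE C]), (-1, [GenE A, GenE B, GenE C])] | A B C.
        A \<in> faces H f \<and> B \<in> faces H f \<and> C \<in> faces H f \<and> collinear_faces H f A B C}
   \<union> {[(1, [GenE A, GenE B]), (-1, [GenE B])] | A B.
        A \<in> faces H f \<and> B \<in> faces H f \<and> face_le H f A B}
   \<union> {[(1, [GenE B, GenE A]), (-1, [GenE B])] | A B.
        A \<in> faces H f \<and> B \<in> faces H f \<and> face_le H f A B}
   \<union> {[(1, [GenE A, GenE B, GenE A, GenT A B]), (1, [GenT A B]), (-1, [GenE A, GenT A B]), (-1, [])]
        | A B. opposes H f A B}
   \<union> {[(1, [GenT A B, GenE A, GenE B, GenE A]), (1, [GenT A B]), (-1, [GenT A B, GenE A]), (-1, [])]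
        | A B. opposes H f A B}"

text \<open>A finite-dimensional module over e R e (e an idempotent generator) is a pair
  (n, \<psi>) where \<psi> assigns to each word w over the generators the n\<times>n complex matrix by
  which the class of e w e acts on complex^n.  The conditions say exactly that the
  linear extension of \<psi> is a unital algebra homomorphism e R e \<rightarrow> M_n(\<complex>):
  it factors through w \<mapsto> e w e, it kills the ideal of relations, it is multiplicative
  for the product (e u e)(e v e) = e u e v e, and e acts as the identity.\<close>

type_synonym 'g rep = "nat \<times> ('g list \<Rightarrow> complex mat)"

definition lin_eval :: "('g list \<Rightarrow> complex mat) \<Rightarrow> nat \<Rightarrow> (complex \<times> 'g list) list \<Rightarrow> complex mat" where
  "lin_eval \<psi> n r = foldr (\<lambda>(c, w) acc. c \<cdot>\<^sub>m \<psi> w + acc) r (0\<^sub>m n n)"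

definition corner_module :: "'g set \<Rightarrow> (complex \<times> 'g list) list set \<Rightarrow> 'g \<Rightarrow> 'g rep \<Rightarrow> bool" where
  "corner_module Gen Rels e X \<longleftrightarrow> (case X of (n, \<psi>) \<Rightarrow>
     (\<forall>w. \<psi> w \<in> carrier_mat n n) \<and>
     (\<forall>w. w \<notin> lists Gen \<longrightarrow> \<psi> w = 0\<^sub>m n n) \<and>
     (\<forall>w\<in>lists Gen. \<psi> w = \<psi> (e # w @ [e])) \<and>
     (\<forall>u\<in>lists Gen. \<forall>v\<in>lists Gen. \<psi> (u @ e # v) = \<psi> u * \<psi> v) \<and>
     \<psi> [e] = 1\<^sub>m n \<and>
     (\<forall>u\<in>lists Gen. \<forall>v\<in>lists Gen. \<forall>r\<in>Rels.
        lin_eval \<psi> n (map (\<lambda>(c, w). (c, u @ w @ v)) r) = 0\<^sub>m n n))"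

definition corner_hom :: "'g set \<Rightarrow> 'g rep \<Rightarrow> 'g rep \<Rightarrow> complex mat set" where
  "corner_hom Gen X Y = {T. T \<in> carrier_mat (fst Y) (fst X) \<and>
      (\<forall>w\<in>lists Gen. T * snd X w = snd Y w * T)}"

text \<open>A category here is given by a set of objects Ob and hom-sets Hom X Y of matrices,
  with composition matrix multiplication and identity 1_m (fst X).\<close>

definition is_functor ::
  "'a rep set \<Rightarrow> ('a rep \<Rightarrow> 'a rep \<Rightarrow> complex mat set) \<Rightarrow>
   'b rep set \<Rightarrow> ('b rep \<Rightarrow> 'b rep \<Rightarrow> complex mat set) \<Rightarrow>
   ('a rep \<Rightarrow> 'b rep) \<Rightarrow> ('a rep \<Rightarrow> 'a rep \<Rightarrow> complex mat \<Rightarrow> complex mat) \<Rightarrow> bool" where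
  "is_functor Ob1 Hom1 Ob2 Hom2 Fo Fm \<longleftrightarrow>
     (\<forall>X\<in>Ob1. Fo X \<in> Ob2) \<and>
     (\<forall>X\<in>Ob1. \<forall>Y\<in>Ob1. \<forall>g\<in>Hom1 X Y. Fm X Y g \<in> Hom2 (Fo X) (Fo Y)) \<and>
     (\<forall>X\<in>Ob1. Fm X X (1\<^sub>m (fst X)) = 1\<^sub>m (fst (Fo X))) \<and>
     (\<forall>X\<in>Ob1. \<forall>Y\<in>Ob1. \<forall>Z\<in>Ob1. \<forall>g\<in>Hom1 X Y. \<forall>h\<in>Hom1 Y Z.
        Fm X Z (h * g) = Fm Y Z h * Fm X Y g)"

definition is_iso :: "('b rep \<Rightarrow> 'b rep \<Rightarrow> complex mat set) \<Rightarrow> 'b rep \<Rightarrow> 'b rep \<Rightarrow> complex mat \<Rightarrow> bool" where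
  "is_iso Hom X Y g \<longleftrightarrow> g \<in> Hom X Y \<and>
     (\<exists>h\<in>Hom Y X. h * g = 1\<^sub>m (fst X) \<and> g * h = 1\<^sub>m (fst Y))"

definition is_nat_iso ::
  "'a rep set \<Rightarrow> ('a rep \<Rightarrow> 'a rep \<Rightarrow> complex mat set) \<Rightarrow> ('b rep \<Rightarrow> 'b rep \<Rightarrow> complex mat set) \<Rightarrow>
   ('a rep \<Rightarrow> 'b rep) \<Rightarrow> ('a rep \<Rightarrow> 'a rep \<Rightarrow> complex mat \<Rightarrow> complex mat) \<Rightarrow>
   ('a rep \<Rightarrow> 'b rep) \<Rightarrow> ('a rep \<Rightarrow> 'a rep \<Rightarrow> complex mat \<Rightarrow> complex mat) \<Rightarrow>
   ('a rep \<Rightarrow> complex mat) \<Rightarrow> bool" where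
  "is_nat_iso Ob1 Hom1 Hom2 Fo Fm Go Gm \<eta> \<longleftrightarrow>
     (\<forall>X\<in>Ob1. is_iso Hom2 (Fo X) (Go X) (\<eta> X)) \<and>
     (\<forall>X\<in>Ob1. \<forall>Y\<in>Ob1. \<forall>g\<in>Hom1 X Y. Gm X Y g * \<eta> X = \<eta> Y * Fm X Y g)"

definition cat_equivalent ::
  "'a rep set \<Rightarrow> ('a rep \<Rightarrow> 'a rep \<Rightarrow> complex mat set) \<Rightarrow>
   'b rep set \<Rightarrow> ('b rep \<Rightarrow> 'b rep \<Rightarrow> complex mat set) \<Rightarrow> bool" where
  "cat_equivalent Ob1 Hom1 Ob2 Hom2 \<longleftrightarrow>
     (\<exists>Fo Fm Go Gm \<eta> \<epsilon>.
        is_functor Ob1 Hom1 Ob2 Hom2 Fo Fm \<and>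
        is_functor Ob2 Hom2 Ob1 Hom1 Go Gm \<and>
        is_nat_iso Ob1 Hom1 Hom1 (\<lambda>X. X) (\<lambda>X Y g. g)
           (\<lambda>X. Go (Fo X)) (\<lambda>X Y g. Gm (Fo X) (Fo Y) (Fm X Y g)) \<eta> \<and>
        is_nat_iso Ob2 Hom2 Hom2 (\<lambda>X. Fo (Go X)) (\<lambda>X Y g. Fm (Go X) (Go Y) (Gm X Y g))
           (\<lambda>X. X) (\<lambda>X Y g. g) \<epsilon>)"

definition corner_mod_ob :: "'h set \<Rightarrow> ('h \<Rightarrow> real^'n) \<Rightarrow> ('h \<Rightarrow> real) \<Rightarrow> 'h gen rep set" where
  "corner_mod_ob H f A = {X. corner_module (R_gens H f) (R_rels H f) (GenE A) X}"

definition corner_mod_hom :: "'h set \<Rightarrow> ('h \<Rightarrow> real^'n) \<Rightarrow> 'h gen rep \<Rightarrow> 'h gen rep \<Rightarrow> complex mat set" where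
  "corner_mod_hom H f = corner_hom (R_gens H f)"

end

theory Submission
  imports Defs
begin

lemma lin_eval_idx:
  assumes car: "\<forall>w. \<psi> w \<in> carrier_mat n n"
  shows "lin_eval \<psi> n r \<in> carrier_mat n n \<and>
    (\<forall>i<n. \<forall>j<n. lin_eval \<psi> n r $$ (i,j) = (\<Sum>(c,w)\<leftarrow>r. c * \<psi> w $$ (i,j)))"
proof (induction r)
  case Nil
  then show ?case by (simp add: lin_eval_def)
next
  case (Cons x r)
  obtain c w where x: "x = (c, w)" by fastforce
  have e: "lin_eval \<psi> n (x # r) = c \<cdot>\<^sub>m \<psi> w + lin_eval \<psi> n r"
    by (simp add: lin_eval_def x)
  have cw: "\<psi> w \<in> carrier_mat n n" using car by blast
  show ?case using Cons cw unfolding e by (auto simp: x)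
qed

lemma lin_eval_cong:
  assumes "\<forall>(c,w)\<in>set r. \<psi>' w = \<psi> (g w)"
  shows "lin_eval \<psi>' n r = lin_eval \<psi> n (map (\<lambda>(c,w). (c, g w)) r)"
  using assms by (induction r) (auto simp: lin_eval_def)

lemma opposes_sym: "opposes H f A B \<Longrightarrow> opposes H f B A"
  unfolding opposes_def by (metis add.inverse_inverse)

lemma opposes_faces: "opposes H f A B \<Longrightarrow> A \<in> faces H f \<and> B \<in> faces H f"
  unfolding opposes_def by blast

lemma genE_in: "C \<in> faces H f \<Longrightarrow> GenE C \<in> R_gens H f"
  unfolding R_gens_def by blast

lemma genT_in: "opposes H f A B \<Longrightarrow> GenT A B \<in> R_gens H f"
  unfolding R_gens_def by blast

lemma opposes_gens: "opposes H f A B \<Longrightarrow> GenE A \<in> R_gens H f \<and> GenE B \<in> R_gens H f \<and> GenT A B \<in> R_gens H f"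
  using opposes_faces genE_in genT_in by blast

lemma rels_words: "r \<in> R_rels H f \<Longrightarrow> (c,w) \<in> set r \<Longrightarrow> w \<in> lists (R_gens H f)"
  unfolding R_rels_def
  by (auto simp: genE_in dest!: opposes_gens)

context
  fixes H :: "'h set" and f :: "'h \<Rightarrow> real^'n" and n :: nat
    and \<psi> :: "'h gen list \<Rightarrow> complex mat"
  assumes car: "\<forall>w. \<psi> w \<in> carrier_mat n n"
    and rel: "\<forall>u\<in>lists (R_gens H f). \<forall>v\<in>lists (R_gens H f). \<forall>r\<in>R_rels H f.
        lin_eval \<psi> n (map (\<lambda>(c, w). (c, u @ w @ v)) r) = 0\<^sub>m n n"
begin

lemma rel_entry:
  assumes "u \<in> lists (R_gens H f)" "v \<in> lists (R_gens H f)" "r \<in> R_rels H f" "i < n" "j < n"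
  shows "(\<Sum>x\<leftarrow>r. fst x * \<psi> (u @ snd x @ v) $$ (i,j)) = 0"
proof -
  have "lin_eval \<psi> n (map (\<lambda>(c, w). (c, u @ w @ v)) r) = 0\<^sub>m n n" using rel assms by blast
  then have "lin_eval \<psi> n (map (\<lambda>(c, w). (c, u @ w @ v)) r) $$ (i,j) = 0" using assms by simp
  then show ?thesis using lin_eval_idx[OF car, of "map (\<lambda>(c, w). (c, u @ w @ v)) r"] assms
    by (simp add: case_prod_beta comp_def)
qed

lemma mat_eq_entries:
  assumes "\<And>i j. i < n \<Longrightarrow> j < n \<Longrightarrow> \<psi> x $$ (i,j) = \<psi> y $$ (i,j)"
  shows "\<psi> x = \<psi> y"
proof -
  have "\<psi> x \<in> carrier_mat n n" "\<psi> y \<in> carrier_mat n n" using car by auto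
  then show ?thesis using assms by (intro eq_matI) auto
qed

lemma idem:
  assumes "C \<in> faces H f" "u \<in> lists (R_gens H f)" "v \<in> lists (R_gens H f)"
  shows "\<psi> (u @ GenE C # GenE C # v) = \<psi> (u @ GenE C # v)"
proof (rule mat_eq_entries)
  fix i j assume ij: "i < n" "j < n"
  have "[(1, [GenE C, GenE C]), (-1, [GenE C])] \<in> R_rels H f"
    using assms unfolding R_rels_def by blast
  from rel_entry[OF assms(2,3) this ij] show "\<psi> (u @ GenE C # GenE C # v) $$ (i, j) = \<psi> (u @ GenE C # v) $$ (i, j)"
    by simp
qed

lemma KA:
  assumes "opposes H f A B" "u \<in> lists (R_gens H f)" "v \<in> lists (R_gens H f)"
  shows "\<psi> (u @ GenE A # GenE B # GenE A # GenT A B # v) = \<psi> (u @ GenE A # v)"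
proof (rule mat_eq_entries)
  fix i j assume ij: "i < n" "j < n"
  have F: "A \<in> faces H f" "B \<in> faces H f" using opposes_faces[OF assms(1)] by auto
  have G: "GenE A \<in> R_gens H f" "GenE B \<in> R_gens H f" "GenT A B \<in> R_gens H f"
    using F assms(1) by (auto simp: genE_in genT_in)
  have "[(1, [GenE A, GenE B, GenE A, GenT A B]), (1, [GenT A B]), (-1, [GenE A, GenT A B]), (-1, [])] \<in> R_rels H f"
    using assms unfolding R_rels_def by blast
  from rel_entry[OF _ assms(3) this ij, of "u @ [GenE A]"]
  have "\<psi> (u @ GenE A # GenE A # GenE B # GenE A # GenT A B # v) $$ (i,j)
     + \<psi> (u @ GenE A # GenT A B # v) $$ (i,j) - \<psi> (u @ GenE A # GenE A # GenT A B # v) $$ (i,j)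
     - \<psi> (u @ GenE A # v) $$ (i,j) = 0"
    using assms G by (simp add: algebra_simps)
  moreover have "\<psi> (u @ GenE A # GenE A # GenE B # GenE A # GenT A B # v) = \<psi> (u @ GenE A # GenE B # GenE A # GenT A B # v)"
    using idem F G assms by simp
  moreover have "\<psi> (u @ GenE A # GenE A # GenT A B # v) = \<psi> (u @ GenE A # GenT A B # v)"
    using idem F G assms by simp
  ultimately show "\<psi> (u @ GenE A # GenE B # GenE A # GenT A B # v) $$ (i,j) = \<psi> (u @ GenE A # v) $$ (i,j)"
    by (simp add: algebra_simps)
qed

lemma KA':
  assumes "opposes H f A B" "u \<in> lists (R_gens H f)" "v \<in> lists (R_gens H f)"
  shows "\<psi> (u @ GenT A B # GenE A # GenE B # GenE A # v) = \<psi> (u @ GenE A # v)"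
proof (rule mat_eq_entries)
  fix i j assume ij: "i < n" "j < n"
  have F: "A \<in> faces H f" "B \<in> faces H f" using opposes_faces[OF assms(1)] by auto
  have G: "GenE A \<in> R_gens H f" "GenE B \<in> R_gens H f" "GenT A B \<in> R_gens H f"
    using F assms(1) by (auto simp: genE_in genT_in)
  have "[(1, [GenT A B, GenE A, GenE B, GenE A]), (1, [GenT A B]), (-1, [GenT A B, GenE A]), (-1, [])] \<in> R_rels H f"
    using assms unfolding R_rels_def by blast
  from rel_entry[OF assms(2) _ this ij, of "GenE A # v"]
  have "\<psi> (u @ GenT A B # GenE A # GenE B # GenE A # GenE A # v) $$ (i,j)
     + \<psi> (u @ GenT A B # GenE A # v) $$ (i,j) - \<psi> (u @ GenT A B # GenE A # GenE A # v) $$ (i,j)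
     - \<psi> (u @ GenE A # v) $$ (i,j) = 0"
    using assms G by (simp add: algebra_simps)
  moreover have "\<psi> (u @ GenT A B # GenE A # GenE B # GenE A # GenE A # v) = \<psi> (u @ GenT A B # GenE A # GenE B # GenE A # v)"
    using idem[of A "u @ [GenT A B, GenE A, GenE B]" v] F G assms by simp
  moreover have "\<psi> (u @ GenT A B # GenE A # GenE A # v) = \<psi> (u @ GenT A B # GenE A # v)"
    using idem[of A "u @ [GenT A B]" v] F G assms by simp
  ultimately show "\<psi> (u @ GenT A B # GenE A # GenE B # GenE A # v) $$ (i,j) = \<psi> (u @ GenE A # v) $$ (i,j)"
    by (simp add: algebra_simps)
qed

lemma Z:
  assumes "opposes H f A B" "u \<in> lists (R_gens H f)" "v \<in> lists (R_gens H f)"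
  shows "\<psi> (u @ GenE B # GenE A # GenT A B # GenE A # GenE B # v) = \<psi> (u @ GenE B # v)"
proof -
  have O': "opposes H f B A" using opposes_sym assms(1) .
  have F: "A \<in> faces H f" "B \<in> faces H f" using opposes_faces[OF assms(1)] by auto
  have G: "GenE A \<in> R_gens H f" "GenE B \<in> R_gens H f" "GenT A B \<in> R_gens H f" "GenT B A \<in> R_gens H f"
    using F assms(1) O' by (auto simp: genE_in genT_in)
  have "\<psi> (u @ GenE B # GenE A # GenT A B # GenE A # GenE B # v)
      = \<psi> (u @ GenT B A # GenE B # GenE A # GenE B # GenE A # GenT A B # GenE A # GenE B # v)"
    using KA'[OF O', of u "GenE A # GenT A B # GenE A # GenE B # v"] assms G by simp
  also have "\<dots> = \<psi> ((u @ [GenT B A, GenE B]) @ GenE A # GenE A # GenE B # v)"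
    using KA[OF assms(1), of "u @ [GenT B A, GenE B]" "GenE A # GenE B # v"] assms G by simp
  also have "\<dots> = \<psi> ((u @ [GenT B A, GenE B]) @ GenE A # GenE B # v)"
    using idem[OF F(1), of "u @ [GenT B A, GenE B]" "GenE B # v"] assms G by simp
  also have "\<dots> = \<psi> (u @ GenE B # v)"
    using KA'[OF O', of u v] assms G by simp
  finally show ?thesis .
qed

end

definition transp :: "'g set \<Rightarrow> 'g list \<Rightarrow> 'g list \<Rightarrow> 'g rep \<Rightarrow> 'g rep" where
  "transp G p q X = (fst X, \<lambda>w. if w \<in> lists G then snd X (p @ w @ q) else 0\<^sub>m (fst X) (fst X))"

lemma transp_hom:
  assumes "p \<in> lists G" "q \<in> lists G" "T \<in> corner_hom G X Y"
  shows "T \<in> corner_hom G (transp G p q X) (transp G p q Y)"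
  using assms unfolding corner_hom_def transp_def by auto

lemma transp_rel:
  assumes rel: "\<forall>u\<in>lists (R_gens H f). \<forall>v\<in>lists (R_gens H f). \<forall>r\<in>R_rels H f.
        lin_eval \<psi> n (map (\<lambda>(c, w). (c, u @ w @ v)) r) = 0\<^sub>m n n"
    and pq: "p \<in> lists (R_gens H f)" "q \<in> lists (R_gens H f)"
    and phi: "\<forall>w\<in>lists (R_gens H f). \<phi> w = \<psi> (p @ w @ q)"
  shows "\<forall>u\<in>lists (R_gens H f). \<forall>v\<in>lists (R_gens H f). \<forall>r\<in>R_rels H f.
        lin_eval \<phi> n (map (\<lambda>(c, w). (c, u @ w @ v)) r) = 0\<^sub>m n n"
proof (intro ballI)
  fix u v r assume uv: "u \<in> lists (R_gens H f)" "v \<in> lists (R_gens H f)" and r: "r \<in> R_rels H f"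
  have "\<forall>(c,w)\<in>set (map (\<lambda>(c, w). (c, u @ w @ v)) r). \<phi> w = \<psi> (p @ w @ q)"
  proof (clarsimp)
    fix c w assume "(c, w) \<in> set r"
    then have "w \<in> lists (R_gens H f)" by (rule rels_words[OF r])
    then have "u @ w @ v \<in> lists (R_gens H f)" using uv by simp
    then show "\<phi> (u @ w @ v) = \<psi> (p @ u @ w @ v @ q)" using phi by simp
  qed
  then have "lin_eval \<phi> n (map (\<lambda>(c, w). (c, u @ w @ v)) r)
     = lin_eval \<psi> n (map (\<lambda>(c,w). (c, p @ w @ q)) (map (\<lambda>(c, w). (c, u @ w @ v)) r))"
    by (rule lin_eval_cong)
  also have "map (\<lambda>(c,w). (c, p @ w @ q)) (map (\<lambda>(c, w). (c, u @ w @ v)) r)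
     = map (\<lambda>(c, w). (c, (p @ u) @ w @ (v @ q))) r"
    by (induction r) auto
  also have "lin_eval \<psi> n \<dots> = 0\<^sub>m n n"
    using rel[rule_format, of "p @ u" "v @ q" r] uv pq r by simp
  finally show "lin_eval \<phi> n (map (\<lambda>(c, w). (c, u @ w @ v)) r) = 0\<^sub>m n n" .
qed

lemma module_parts:
  assumes "corner_module G Rels e (n, \<psi>)"
  shows "\<forall>w. \<psi> w \<in> carrier_mat n n"
     "\<forall>w. w \<notin> lists G \<longrightarrow> \<psi> w = 0\<^sub>m n n"
     "\<forall>w\<in>lists G. \<psi> w = \<psi> (e # w @ [e])"
     "\<forall>u\<in>lists G. \<forall>v\<in>lists G. \<psi> (u @ e # v) = \<psi> u * \<psi> v"
     "\<psi> [e] = 1\<^sub>m n"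
     "\<forall>u\<in>lists G. \<forall>v\<in>lists G. \<forall>r\<in>Rels.
        lin_eval \<psi> n (map (\<lambda>(c, w). (c, u @ w @ v)) r) = 0\<^sub>m n n"
  using assms unfolding corner_module_def by auto

lemma F_mod:
  assumes O: "opposes H f A B"
    and M: "corner_module (R_gens H f) (R_rels H f) (GenE A) (n, \<psi>)"
  shows "corner_module (R_gens H f) (R_rels H f) (GenE B)
           (transp (R_gens H f) [GenE B] [GenE B, GenE A, GenT A B] (n, \<psi>))"
proof -
  let ?G = "R_gens H f"
  let ?a = "GenE A" and ?b = "GenE B" and ?t = "GenT A B"
  have O': "opposes H f B A" using opposes_sym O .
  have F: "A \<in> faces H f" "B \<in> faces H f" using opposes_faces[OF O] by auto
  have G: "?a \<in> ?G" "?b \<in> ?G" "?t \<in> ?G" "GenT B A \<in> ?G"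
    using opposes_gens[OF O] opposes_gens[OF O'] by auto
  note P = module_parts[OF M]
  note car = P(1) and rel = P(6)
  define \<phi> where "\<phi> = (\<lambda>w. if w \<in> lists ?G then \<psi> (?b # w @ [?b, ?a, ?t]) else 0\<^sub>m n n)"
  have eq: "transp ?G [?b] [?b, ?a, ?t] (n, \<psi>) = (n, \<phi>)" unfolding transp_def \<phi>_def by (simp add: fun_eq_iff)
  have one: "\<psi> [] = 1\<^sub>m n"
    using P(3) P(5) idem[OF car rel F(1), of "[]" "[]"] by simp
  show ?thesis unfolding eq corner_module_def prod.case
  proof (intro conjI ballI allI impI)
    fix w show "\<phi> w \<in> carrier_mat n n" unfolding \<phi>_def using car by auto
  next
    fix w assume "w \<notin> lists ?G" then show "\<phi> w = 0\<^sub>m n n" unfolding \<phi>_def by auto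
  next
    fix w assume w: "w \<in> lists ?G"
    have "\<psi> ([] @ ?b # ?b # (w @ [?b, ?b, ?a, ?t])) = \<psi> ([] @ ?b # (w @ [?b, ?b, ?a, ?t]))"
      using idem[OF car rel F(2), where u="[]" and v="w @ [?b, ?b, ?a, ?t]"] w G by simp
    moreover have "\<psi> ((?b # w) @ ?b # ?b # [?a, ?t]) = \<psi> ((?b # w) @ ?b # [?a, ?t])"
      using idem[OF car rel F(2), where u="?b # w" and v="[?a, ?t]"] w G by simp
    ultimately show "\<phi> w = \<phi> (?b # w @ [?b])" unfolding \<phi>_def using w G by simp
  next
    fix u v assume uv: "u \<in> lists ?G" "v \<in> lists ?G"
    have "\<phi> u * \<phi> v = \<psi> (?b # u @ [?b, ?a, ?t]) * \<psi> (?b # v @ [?b, ?a, ?t])"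
      unfolding \<phi>_def using uv by simp
    also have "\<dots> = \<psi> ((?b # u @ [?b, ?a, ?t]) @ ?a # (?b # v @ [?b, ?a, ?t]))"
      using P(4)[rule_format, of "?b # u @ [?b, ?a, ?t]" "?b # v @ [?b, ?a, ?t]"] uv G by simp
    also have "\<dots> = \<psi> ((?b # u) @ ?b # ?a # ?t # ?a # ?b # (v @ [?b, ?a, ?t]))" by simp
    also have "\<dots> = \<psi> ((?b # u) @ ?b # (v @ [?b, ?a, ?t]))"
      using Z[OF car rel O, where u="?b # u" and v="v @ [?b, ?a, ?t]"] uv G by simp
    also have "\<dots> = \<phi> (u @ ?b # v)" unfolding \<phi>_def using uv G by simp
    finally show "\<phi> (u @ ?b # v) = \<phi> u * \<phi> v" by simp
  next
    have "\<phi> [?b] = \<psi> ([] @ ?b # ?b # [?b, ?a, ?t])" unfolding \<phi>_def using G by simp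
    also have "\<dots> = \<psi> ([] @ ?b # [?b, ?a, ?t])"
      using idem[OF car rel F(2), where u="[]" and v="[?b, ?a, ?t]"] G by simp
    also have "\<dots> = \<psi> ([] @ ?b # [?a, ?t])"
      using idem[OF car rel F(2), where u="[]" and v="[?a, ?t]"] G by simp
    also have "\<dots> = \<psi> ([] @ ?a # ?b # ?a # ?t # [?a])" using P(3)[rule_format, of "[?b, ?a, ?t]"] G by simp
    also have "\<dots> = \<psi> ([] @ ?a # [?a])" using KA[OF car rel O, where u="[]" and v="[?a]"] G by simp
    also have "\<dots> = \<psi> ([] @ ?a # [])" using idem[OF car rel F(1), where u="[]" and v="[]"] G by simp
    also have "\<dots> = 1\<^sub>m n" using P(5) by simp
    finally show "\<phi> [?b] = 1\<^sub>m n" .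
  next
    fix u v r assume "u \<in> lists ?G" "v \<in> lists ?G" "r \<in> R_rels H f"
    moreover have "\<forall>u\<in>lists ?G. \<forall>v\<in>lists ?G. \<forall>r\<in>R_rels H f.
        lin_eval \<phi> n (map (\<lambda>(c, w). (c, u @ w @ v)) r) = 0\<^sub>m n n"
      by (rule transp_rel[OF rel, of "[?b]" "[?b, ?a, ?t]"]) (use G in \<open>auto simp: \<phi>_def\<close>)
    ultimately show "lin_eval \<phi> n (map (\<lambda>(c, w). (c, u @ w @ v)) r) = 0\<^sub>m n n" by blast
  qed
qed

lemma G_mod:
  assumes O: "opposes H f A B"
    and M: "corner_module (R_gens H f) (R_rels H f) (GenE B) (n, \<psi>)"
  shows "corner_module (R_gens H f) (R_rels H f) (GenE A)
           (transp (R_gens H f) [GenE A, GenT A B, GenE A] [GenE A] (n, \<psi>))"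
proof -
  let ?G = "R_gens H f"
  let ?a = "GenE A" and ?b = "GenE B" and ?t = "GenT A B"
  have O': "opposes H f B A" using opposes_sym O .
  have F: "A \<in> faces H f" "B \<in> faces H f" using opposes_faces[OF O] by auto
  have G: "?a \<in> ?G" "?b \<in> ?G" "?t \<in> ?G" "GenT B A \<in> ?G"
    using opposes_gens[OF O] opposes_gens[OF O'] by auto
  note P = module_parts[OF M]
  note car = P(1) and rel = P(6)
  define \<phi> where "\<phi> = (\<lambda>w. if w \<in> lists ?G then \<psi> ([?a, ?t, ?a] @ w @ [?a]) else 0\<^sub>m n n)"
  have eq: "transp ?G [?a, ?t, ?a] [?a] (n, \<psi>) = (n, \<phi>)" unfolding transp_def \<phi>_def by (simp add: fun_eq_iff)
  show ?thesis unfolding eq corner_module_def prod.case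
  proof (intro conjI ballI allI impI)
    fix w show "\<phi> w \<in> carrier_mat n n" unfolding \<phi>_def using car by auto
  next
    fix w assume "w \<notin> lists ?G" then show "\<phi> w = 0\<^sub>m n n" unfolding \<phi>_def by auto
  next
    fix w assume w: "w \<in> lists ?G"
    have "\<psi> ([?a, ?t] @ ?a # ?a # (w @ [?a, ?a])) = \<psi> ([?a, ?t] @ ?a # (w @ [?a, ?a]))"
      using idem[OF car rel F(1), where u="[?a, ?t]" and v="w @ [?a, ?a]"] w G by simp
    moreover have "\<psi> (([?a, ?t, ?a] @ w) @ ?a # ?a # []) = \<psi> (([?a, ?t, ?a] @ w) @ ?a # [])"
      using idem[OF car rel F(1), where u="[?a, ?t, ?a] @ w" and v="[]"] w G by simp
    ultimately show "\<phi> w = \<phi> (?a # w @ [?a])" unfolding \<phi>_def using w G by simp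
  next
    fix u v assume uv: "u \<in> lists ?G" "v \<in> lists ?G"
    have "\<phi> u * \<phi> v = \<psi> ([?a, ?t, ?a] @ u @ [?a]) * \<psi> ([?a, ?t, ?a] @ v @ [?a])"
      unfolding \<phi>_def using uv by simp
    also have "\<dots> = \<psi> (([?a, ?t, ?a] @ u @ [?a]) @ ?b # ([?a, ?t, ?a] @ v @ [?a]))"
      using P(4)[rule_format, of "[?a, ?t, ?a] @ u @ [?a]" "[?a, ?t, ?a] @ v @ [?a]"] uv G by simp
    also have "\<dots> = \<psi> (([?a, ?t, ?a] @ u) @ ?a # ?b # ?a # ?t # (?a # v @ [?a]))" by simp
    also have "\<dots> = \<psi> (([?a, ?t, ?a] @ u) @ ?a # ?a # v @ [?a])"
      using KA[OF car rel O, where u="[?a, ?t, ?a] @ u" and v="?a # v @ [?a]"] uv G by simp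
    also have "\<dots> = \<psi> (([?a, ?t, ?a] @ u) @ ?a # v @ [?a])"
      using idem[OF car rel F(1), where u="[?a, ?t, ?a] @ u" and v="v @ [?a]"] uv G by simp
    also have "\<dots> = \<phi> (u @ ?a # v)" unfolding \<phi>_def using uv G by simp
    finally show "\<phi> (u @ ?a # v) = \<phi> u * \<phi> v" by simp
  next
    have "\<phi> [?a] = \<psi> ([?a, ?t] @ ?a # ?a # [?a])" unfolding \<phi>_def using G by simp
    also have "\<dots> = \<psi> ([?a, ?t] @ ?a # [?a])"
      using idem[OF car rel F(1), where u="[?a, ?t]" and v="[?a]"] G by simp
    also have "\<dots> = \<psi> ([?a, ?t] @ ?a # [])"
      using idem[OF car rel F(1), where u="[?a, ?t]" and v="[]"] G by simp
    also have "\<dots> = \<psi> ([] @ ?b # ?a # ?t # ?a # ?b # [])"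
      using P(3)[rule_format, of "[?a, ?t, ?a]"] G by simp
    also have "\<dots> = \<psi> ([] @ ?b # [])" using Z[OF car rel O, where u="[]" and v="[]"] G by simp
    also have "\<dots> = 1\<^sub>m n" using P(5) by simp
    finally show "\<phi> [?a] = 1\<^sub>m n" .
  next
    fix u v r assume "u \<in> lists ?G" "v \<in> lists ?G" "r \<in> R_rels H f"
    moreover have "\<forall>u\<in>lists ?G. \<forall>v\<in>lists ?G. \<forall>r\<in>R_rels H f.
        lin_eval \<phi> n (map (\<lambda>(c, w). (c, u @ w @ v)) r) = 0\<^sub>m n n"
      by (rule transp_rel[OF rel, of "[?a, ?t, ?a]" "[?a]"]) (use G in \<open>auto simp: \<phi>_def\<close>)
    ultimately show "lin_eval \<phi> n (map (\<lambda>(c, w). (c, u @ w @ v)) r) = 0\<^sub>m n n" by blast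
  qed
qed

lemma GF:
  assumes O: "opposes H f A B"
    and M: "corner_module (R_gens H f) (R_rels H f) (GenE A) (n, \<psi>)"
  shows "transp (R_gens H f) [GenE A, GenT A B, GenE A] [GenE A]
           (transp (R_gens H f) [GenE B] [GenE B, GenE A, GenT A B] (n, \<psi>)) = (n, \<psi>)"
proof -
  let ?G = "R_gens H f"
  let ?a = "GenE A" and ?b = "GenE B" and ?t = "GenT A B"
  have F: "A \<in> faces H f" "B \<in> faces H f" using opposes_faces[OF O] by auto
  have G: "?a \<in> ?G" "?b \<in> ?G" "?t \<in> ?G"
    using opposes_gens[OF O] by auto
  note P = module_parts[OF M]
  note car = P(1) and rel = P(6)
  have key: "\<psi> ([?b] @ ([?a, ?t, ?a] @ w @ [?a]) @ [?b, ?a, ?t]) = \<psi> w" if w: "w \<in> lists ?G" for w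
  proof -
    have "\<psi> ([?b] @ ([?a, ?t, ?a] @ w @ [?a]) @ [?b, ?a, ?t])
        = \<psi> ([] @ ?a # ?b # ?a # ?t # (?a # w @ [?a, ?b, ?a, ?t, ?a]))"
      using P(3)[rule_format, of "[?b] @ ([?a, ?t, ?a] @ w @ [?a]) @ [?b, ?a, ?t]"] w G by simp
    also have "\<dots> = \<psi> ([] @ ?a # ?a # w @ [?a, ?b, ?a, ?t, ?a])"
      using KA[OF car rel O, where u="[]" and v="?a # w @ [?a, ?b, ?a, ?t, ?a]"] w G by simp
    also have "\<dots> = \<psi> ((?a # w) @ ?a # ?b # ?a # ?t # [?a])"
      using idem[OF car rel F(1), where u="[]" and v="w @ [?a, ?b, ?a, ?t, ?a]"] w G by simp
    also have "\<dots> = \<psi> ((?a # w) @ ?a # [?a])"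
      using KA[OF car rel O, where u="?a # w" and v="[?a]"] w G by simp
    also have "\<dots> = \<psi> ((?a # w) @ ?a # [])"
      using idem[OF car rel F(1), where u="?a # w" and v="[]"] w G by simp
    also have "\<dots> = \<psi> w" using P(3) w by simp
    finally show ?thesis .
  qed
  show ?thesis unfolding transp_def
    using key P(2) G by (auto simp: fun_eq_iff)
qed

lemma FG:
  assumes O: "opposes H f A B"
    and M: "corner_module (R_gens H f) (R_rels H f) (GenE B) (n, \<psi>)"
  shows "transp (R_gens H f) [GenE B] [GenE B, GenE A, GenT A B]
           (transp (R_gens H f) [GenE A, GenT A B, GenE A] [GenE A] (n, \<psi>)) = (n, \<psi>)"
proof -
  let ?G = "R_gens H f"
  let ?a = "GenE A" and ?b = "GenE B" and ?t = "GenT A B"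
  have F: "A \<in> faces H f" "B \<in> faces H f" using opposes_faces[OF O] by auto
  have G: "?a \<in> ?G" "?b \<in> ?G" "?t \<in> ?G"
    using opposes_gens[OF O] by auto
  note P = module_parts[OF M]
  note car = P(1) and rel = P(6)
  have key: "\<psi> ([?a, ?t, ?a] @ ([?b] @ w @ [?b, ?a, ?t]) @ [?a]) = \<psi> w" if w: "w \<in> lists ?G" for w
  proof -
    have "\<psi> ([?a, ?t, ?a] @ ([?b] @ w @ [?b, ?a, ?t]) @ [?a])
        = \<psi> ([] @ ?b # ?a # ?t # ?a # ?b # (w @ [?b, ?a, ?t, ?a, ?b]))"
      using P(3)[rule_format, of "[?a, ?t, ?a] @ ([?b] @ w @ [?b, ?a, ?t]) @ [?a]"] w G by simp
    also have "\<dots> = \<psi> ((?b # w) @ ?b # ?a # ?t # ?a # ?b # [])"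
      using Z[OF car rel O, where u="[]" and v="w @ [?b, ?a, ?t, ?a, ?b]"] w G by simp
    also have "\<dots> = \<psi> ((?b # w) @ ?b # [])"
      using Z[OF car rel O, where u="?b # w" and v="[]"] w G by simp
    also have "\<dots> = \<psi> w" using P(3) w by simp
    finally show ?thesis .
  qed
  show ?thesis unfolding transp_def
    using key P(2) G by (auto simp: fun_eq_iff)
qed

definition iso_cat :: "'g rep set \<Rightarrow> 'g rep set \<Rightarrow> ('g rep \<Rightarrow> 'g rep \<Rightarrow> complex mat set) \<Rightarrow> bool" where
  "iso_cat O1 O2 Hom \<longleftrightarrow> (\<exists>Fo Go.
     (\<forall>X\<in>O1. Fo X \<in> O2 \<and> Go (Fo X) = X \<and> fst (Fo X) = fst X) \<and>
     (\<forall>Y\<in>O2. Go Y \<in> O1 \<and> Fo (Go Y) = Y) \<and>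
     (\<forall>X\<in>O1. \<forall>Y\<in>O1. Hom X Y \<subseteq> Hom (Fo X) (Fo Y)) \<and>
     (\<forall>X\<in>O2. \<forall>Y\<in>O2. Hom X Y \<subseteq> Hom (Go X) (Go Y)))"

lemma iso_cat_trans:
  assumes "iso_cat O1 O2 Hom" "iso_cat O2 O3 Hom"
  shows "iso_cat O1 O3 Hom"
proof -
  obtain Fo Go where a: "\<forall>X\<in>O1. Fo X \<in> O2 \<and> Go (Fo X) = X \<and> fst (Fo X) = fst X"
     "\<forall>Y\<in>O2. Go Y \<in> O1 \<and> Fo (Go Y) = Y"
     "\<forall>X\<in>O1. \<forall>Y\<in>O1. Hom X Y \<subseteq> Hom (Fo X) (Fo Y)"
     "\<forall>X\<in>O2. \<forall>Y\<in>O2. Hom X Y \<subseteq> Hom (Go X) (Go Y)"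
    using assms(1) unfolding iso_cat_def by blast
  obtain Fo' Go' where b: "\<forall>X\<in>O2. Fo' X \<in> O3 \<and> Go' (Fo' X) = X \<and> fst (Fo' X) = fst X"
     "\<forall>Y\<in>O3. Go' Y \<in> O2 \<and> Fo' (Go' Y) = Y"
     "\<forall>X\<in>O2. \<forall>Y\<in>O2. Hom X Y \<subseteq> Hom (Fo' X) (Fo' Y)"
     "\<forall>X\<in>O3. \<forall>Y\<in>O3. Hom X Y \<subseteq> Hom (Go' X) (Go' Y)"
    using assms(2) unfolding iso_cat_def by blast
  show ?thesis unfolding iso_cat_def
    apply (rule exI[of _ "\<lambda>X. Fo' (Fo X)"], rule exI[of _ "\<lambda>X. Go (Go' X)"])
    using a b by (smt (verit) subset_trans)
qed

lemma corner_hom_carrier: "g \<in> corner_mod_hom H f X Y \<Longrightarrow> g \<in> carrier_mat (fst Y) (fst X)"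
  unfolding corner_mod_hom_def corner_hom_def by auto

lemma corner_hom_id: "X \<in> corner_mod_ob H f C \<Longrightarrow> 1\<^sub>m (fst X) \<in> corner_mod_hom H f X X"
  unfolding corner_mod_hom_def corner_hom_def corner_mod_ob_def corner_module_def
  apply (cases X) apply clarsimp by (metis left_mult_one_mat right_mult_one_mat)

lemma iso_cat_equiv:
  assumes "iso_cat (corner_mod_ob H f A) (corner_mod_ob H f B) (corner_mod_hom H f)"
  shows "cat_equivalent (corner_mod_ob H f A) (corner_mod_hom H f)
                        (corner_mod_ob H f B) (corner_mod_hom H f)"
proof -
  let ?O1 = "corner_mod_ob H f A" and ?O2 = "corner_mod_ob H f B" and ?Hom = "corner_mod_hom H f"
  obtain Fo Go where a: "\<forall>X\<in>?O1. Fo X \<in> ?O2 \<and> Go (Fo X) = X \<and> fst (Fo X) = fst X"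
     "\<forall>Y\<in>?O2. Go Y \<in> ?O1 \<and> Fo (Go Y) = Y"
     "\<forall>X\<in>?O1. \<forall>Y\<in>?O1. ?Hom X Y \<subseteq> ?Hom (Fo X) (Fo Y)"
     "\<forall>X\<in>?O2. \<forall>Y\<in>?O2. ?Hom X Y \<subseteq> ?Hom (Go X) (Go Y)"
    using assms unfolding iso_cat_def by blast
  have fG: "fst (Go Y) = fst Y" if "Y \<in> ?O2" for Y
    using a that by metis
  have F1: "is_functor ?O1 ?Hom ?O2 ?Hom Fo (\<lambda>X Y g. g)"
    unfolding is_functor_def
  proof (intro conjI ballI)
    fix X Y g assume "X \<in> ?O1" "Y \<in> ?O1" "g \<in> ?Hom X Y"
    then show "g \<in> ?Hom (Fo X) (Fo Y)" using a(3) by blast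
  qed (use a in auto)
  have F2: "is_functor ?O2 ?Hom ?O1 ?Hom Go (\<lambda>X Y g. g)"
    unfolding is_functor_def
  proof (intro conjI ballI)
    fix X Y g assume "X \<in> ?O2" "Y \<in> ?O2" "g \<in> ?Hom X Y"
    then show "g \<in> ?Hom (Go X) (Go Y)" using a(4) by blast
  qed (use a fG in auto)
  have N1: "is_nat_iso ?O1 ?Hom ?Hom (\<lambda>X. X) (\<lambda>X Y g. g)
           (\<lambda>X. Go (Fo X)) (\<lambda>X Y g. g) (\<lambda>X. 1\<^sub>m (fst X))"
    unfolding is_nat_iso_def is_iso_def
  proof (intro conjI ballI)
    fix X assume X: "X \<in> ?O1"
    show "1\<^sub>m (fst X) \<in> ?Hom X (Go (Fo X))" using a X corner_hom_id[OF X] by simp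
    show "\<exists>h\<in>?Hom (Go (Fo X)) X. h * 1\<^sub>m (fst X) = 1\<^sub>m (fst X) \<and> 1\<^sub>m (fst X) * h = 1\<^sub>m (fst (Go (Fo X)))"
      using a X corner_hom_id[OF X] by (intro bexI[of _ "1\<^sub>m (fst X)"]) auto
  next
    fix X Y g assume XY: "X \<in> ?O1" "Y \<in> ?O1" "g \<in> ?Hom X Y"
    have "g \<in> carrier_mat (fst Y) (fst X)" using XY(3) by (rule corner_hom_carrier)
    then show "g * 1\<^sub>m (fst X) = 1\<^sub>m (fst Y) * g" by simp
  qed
  have N2: "is_nat_iso ?O2 ?Hom ?Hom (\<lambda>X. Fo (Go X)) (\<lambda>X Y g. g)
           (\<lambda>X. X) (\<lambda>X Y g. g) (\<lambda>X. 1\<^sub>m (fst X))"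
    unfolding is_nat_iso_def is_iso_def
  proof (intro conjI ballI)
    fix X assume X: "X \<in> ?O2"
    show "1\<^sub>m (fst X) \<in> ?Hom (Fo (Go X)) X" using a X corner_hom_id[OF X] by simp
    show "\<exists>h\<in>?Hom X (Fo (Go X)). h * 1\<^sub>m (fst X) = 1\<^sub>m (fst (Fo (Go X))) \<and> 1\<^sub>m (fst X) * h = 1\<^sub>m (fst X)"
      using a X corner_hom_id[OF X] by (intro bexI[of _ "1\<^sub>m (fst X)"]) auto
  next
    fix X Y g assume XY: "X \<in> ?O2" "Y \<in> ?O2" "g \<in> ?Hom X Y"
    have "g \<in> carrier_mat (fst Y) (fst X)" using XY(3) by (rule corner_hom_carrier)
    then show "g * 1\<^sub>m (fst X) = 1\<^sub>m (fst Y) * g" by simp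
  qed
  show ?thesis unfolding cat_equivalent_def using F1 F2 N1 N2 by blast
qed

lemma opposes_iso_cat:
  assumes O: "opposes H f A B"
  shows "iso_cat (corner_mod_ob H f A) (corner_mod_ob H f B) (corner_mod_hom H f)"
proof -
  let ?G = "R_gens H f"
  let ?a = "GenE A" and ?b = "GenE B" and ?t = "GenT A B"
  have G: "?a \<in> ?G" "?b \<in> ?G" "?t \<in> ?G"
    using opposes_gens[OF O] by auto
  let ?Fo = "transp ?G [?b] [?b, ?a, ?t]" and ?Go = "transp ?G [?a, ?t, ?a] [?a]"
  have h1: "\<forall>X\<in>corner_mod_ob H f A. ?Fo X \<in> corner_mod_ob H f B \<and> ?Go (?Fo X) = X \<and> fst (?Fo X) = fst X"
  proof
    fix X assume X: "X \<in> corner_mod_ob H f A"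
    obtain n \<psi> where Xe: "X = (n, \<psi>)" by (cases X)
    have M: "corner_module ?G (R_rels H f) ?a (n, \<psi>)" using X Xe unfolding corner_mod_ob_def by simp
    show "?Fo X \<in> corner_mod_ob H f B \<and> ?Go (?Fo X) = X \<and> fst (?Fo X) = fst X"
      unfolding Xe using F_mod[OF O M] GF[OF O M]
      by (simp add: corner_mod_ob_def transp_def)
  qed
  have h2: "\<forall>Y\<in>corner_mod_ob H f B. ?Go Y \<in> corner_mod_ob H f A \<and> ?Fo (?Go Y) = Y"
  proof
    fix Y assume Y: "Y \<in> corner_mod_ob H f B"
    obtain n \<psi> where Ye: "Y = (n, \<psi>)" by (cases Y)
    have M: "corner_module ?G (R_rels H f) ?b (n, \<psi>)" using Y Ye unfolding corner_mod_ob_def by simp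
    show "?Go Y \<in> corner_mod_ob H f A \<and> ?Fo (?Go Y) = Y"
      unfolding Ye using G_mod[OF O M] FG[OF O M]
      by (simp add: corner_mod_ob_def)
  qed
  have h3: "corner_mod_hom H f X Y \<subseteq> corner_mod_hom H f (?Fo X) (?Fo Y)" for X Y
    unfolding corner_mod_hom_def by (intro subsetI transp_hom) (use G in auto)
  have h4: "corner_mod_hom H f X Y \<subseteq> corner_mod_hom H f (?Go X) (?Go Y)" for X Y
    unfolding corner_mod_hom_def by (intro subsetI transp_hom) (use G in auto)
  show ?thesis unfolding iso_cat_def
    by (rule exI[of _ ?Fo], rule exI[of _ ?Go]) (use h1 h2 h3 h4 in blast)
qed

lemma chain_iso_cat:
  assumes "\<forall>i < Suc (length Fs). opposes H f ((A # Fs @ [B]) ! i) ((A # Fs @ [B]) ! Suc i)"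
  shows "iso_cat (corner_mod_ob H f A) (corner_mod_ob H f B) (corner_mod_hom H f)"
  using assms
proof (induction Fs arbitrary: A)
  case Nil
  then have "opposes H f A B" by auto
  then show ?case by (rule opposes_iso_cat)
next
  case (Cons F Fs)
  from Cons.prems have o1: "opposes H f A F" by (metis nth_Cons_0 nth_Cons_Suc zero_less_Suc append_Cons)
  have "\<forall>i < Suc (length Fs). opposes H f ((F # Fs @ [B]) ! i) ((F # Fs @ [B]) ! Suc i)"
  proof (intro allI impI)
    fix i assume "i < Suc (length Fs)"
    then have "Suc i < Suc (length (F # Fs))" by simp
    then show "opposes H f ((F # Fs @ [B]) ! i) ((F # Fs @ [B]) ! Suc i)"
      using Cons.prems by (metis append_Cons nth_Cons_Suc)
  qed
  from Cons.IH[OF this] opposes_iso_cat[OF o1] show ?case by (metis iso_cat_trans)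
qed

theorem corollary4p2:
  fixes H :: "'h set" and f :: "'h \<Rightarrow> real^'n"
    and A B :: "'h \<Rightarrow> real" and Fs :: "('h \<Rightarrow> real) list"
  assumes "finite H"
    and "\<forall>h\<in>H. f h \<noteq> 0"
    and "\<forall>h\<in>H. \<forall>h'\<in>H. h \<noteq> h' \<longrightarrow> {x. f h \<bullet> x = 0} \<noteq> {x. f h' \<bullet> x = 0}"
    and "\<forall>F\<in>set (A # Fs @ [B]). F \<in> faces H f"
    and "\<forall>F\<in>set (A # Fs @ [B]). face_dim H f F = face_dim H f A"
    and "\<forall>i < Suc (length Fs). opposes H f ((A # Fs @ [B]) ! i) ((A # Fs @ [B]) ! Suc i)"
  shows "cat_equivalent (corner_mod_ob H f A) (corner_mod_hom H f)
                        (corner_mod_ob H f B) (corner_mod_hom H f)"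
  by (rule iso_cat_equiv[OF chain_iso_cat[OF assms(6)]])

end
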